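(* Let $S\subset\mathbf{P}^4$ be an irreducible developable ruled surface, i.e. either the tangent developable surface of a curve or a cone with a point as vertex over a curve, which is not a plane. Let $\pi\subset\mathbf{P}^4$ be a plane such that every tangent plane of $S$ meets $\pi$ in a line. Then $S$ is contained in a hyperplane of $\mathbf{P}^4$ that contains $\pi$.
   Context: Work over $\mathbf{C}$. The tangent plane of a developable ruled surface is constant along each generator. For the tangent developable of a curve $C$, the tangent plane along the tangent line at a point of $C$ is the osculating plane of $C$ there. For a cone with vertex $O$, the tangent plane along the generator $\langle O,x\rangle$ is spanned by $O$ and the tangent line at $x$ of a directrix curve. *)

theory Defs
  imports "HOL-Complex_Analysis.Complex_Analysis"
begin

text \<open>Projective 4-space P^4 over C is modelled by C^5 = complex^5; a projective
linear subspace of projective dimension k is a complex linear subspace of C^5 of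
dimension k+1 (vec.subspace / vec.dim, complex scalars).  A set of points of P^4
is modelled by its affine cone in C^5.\<close>

definition proj_plane :: "(complex^5) set \<Rightarrow> bool" where
  "proj_plane P \<longleftrightarrow> vec.subspace P \<and> vec.dim P = 3"

definition proj_line :: "(complex^5) set \<Rightarrow> bool" where
  "proj_line L \<longleftrightarrow> vec.subspace L \<and> vec.dim L = 2"

definition proj_hyperplane :: "(complex^5) set \<Rightarrow> bool" where
  "proj_hyperplane H \<longleftrightarrow> vec.subspace H \<and> vec.dim H = 4"

definition vderiv :: "(complex \<Rightarrow> complex^'n) \<Rightarrow> complex \<Rightarrow> complex^'n" where
  "vderiv g t = (\<chi> i. deriv (\<lambda>s. g s $ i) t)"

definition holo_curve :: "(complex \<Rightarrow> complex^'n) \<Rightarrow> complex set \<Rightarrow> bool" where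
  "holo_curve g U \<longleftrightarrow> (\<forall>i. (\<lambda>s. g s $ i) holomorphic_on U)"

text \<open>Tangent developable of the curve g (parameter domain U): union of the tangent
lines; its tangent plane along the tangent line at g t is the osculating plane.\<close>
definition tdev_surface :: "(complex \<Rightarrow> complex^5) \<Rightarrow> complex set \<Rightarrow> (complex^5) set" where
  "tdev_surface g U = (\<Union>t\<in>U. vec.span {g t, vderiv g t})"

definition tdev_tplane :: "(complex \<Rightarrow> complex^5) \<Rightarrow> complex \<Rightarrow> (complex^5) set" where
  "tdev_tplane g t = vec.span {g t, vderiv g t, vderiv (vderiv g) t}"

definition cone_surface :: "complex^5 \<Rightarrow> (complex \<Rightarrow> complex^5) \<Rightarrow> complex set \<Rightarrow> (complex^5) set" where
  "cone_surface v g U = (\<Union>t\<in>U. vec.span {v, g t})"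

definition cone_tplane :: "complex^5 \<Rightarrow> (complex \<Rightarrow> complex^5) \<Rightarrow> complex \<Rightarrow> (complex^5) set" where
  "cone_tplane v g t = vec.span {v, g t, vderiv g t}"

end

theory Submission
  imports Defs
begin

interpretation vsp: vector_space_pair "(*s) :: complex \<Rightarrow> complex^5 \<Rightarrow> complex^5" "(*) :: complex \<Rightarrow> complex \<Rightarrow> complex"
  by unfold_locales

lemma lin_kernel_span:
  assumes lc: "Vector_Spaces.linear ((*s) :: complex \<Rightarrow> complex^5 \<Rightarrow> complex^5) (*) c"
    and "x \<in> vec.span B" and "\<forall>b\<in>B. c b = 0"
  shows "c x = 0"
proof -
  interpret lc: Vector_Spaces.linear "(*s) :: complex \<Rightarrow> complex^5 \<Rightarrow> complex^5" "(*)" c by (rule lc)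
  show ?thesis using lc.eq_0_on_span assms(2,3) by blast
qed

lemma coords:
  assumes "proj_plane P"
  obtains c d :: "complex^5 \<Rightarrow> complex" where
    "Vector_Spaces.linear (*s) (*) c" "Vector_Spaces.linear (*s) (*) d"
    "\<And>x. x \<in> P \<longleftrightarrow> c x = 0 \<and> d x = 0"
proof -
  have sP: "vec.subspace P" and dP: "vec.dim P = 3" using assms unfolding proj_plane_def by auto
  obtain B0 where B0: "B0 \<subseteq> P" "vec.independent B0" "P \<subseteq> vec.span B0" "card B0 = 3"
    using vec.basis_exists[of P] dP by auto
  have spB0: "vec.span B0 = P" using B0 sP vec.span_minimal by blast
  define E where "E = vec.extend_basis B0"
  have E: "B0 \<subseteq> E" "vec.independent E" "vec.span E = UNIV"
    unfolding E_def using B0(2) vec.extend_basis_superset vec.independent_extend_basis vec.span_extend_basis by auto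
  have fE: "finite E" using E(2) vec.finiteI_independent by blast
  have cE: "card E = 5"
    using vec.dim_eq_card_independent[OF E(2)] E(3) vec.dim_span[of E] vec_dim_card[where 'a=complex and 'n=5] by simp
  have "card (E - B0) = 2" using cE B0(4) E(1) fE by (simp add: card_Diff_subset finite_subset)
  then obtain b4 b5 where b: "E - B0 = {b4, b5}" "b4 \<noteq> b5" by (auto simp: card_2_iff)
  have Eeq: "E = insert b4 (insert b5 B0)" using b E(1) by blast
  have b4n: "b4 \<notin> B0" "b5 \<notin> B0" using b by auto
  obtain c where c: "Vector_Spaces.linear (*s) (*) c" "\<forall>x\<in>E. c x = (if x = b4 then 1 else 0)"
    using vsp.linear_independent_extend[OF E(2), of "\<lambda>x. if x = b4 then 1 else 0"] by blast
  obtain d where d: "Vector_Spaces.linear (*s) (*) d" "\<forall>x\<in>E. d x = (if x = b5 then 1 else 0)"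
    using vsp.linear_independent_extend[OF E(2), of "\<lambda>x. if x = b5 then 1 else 0"] by blast
  interpret lc: Vector_Spaces.linear "(*s) :: complex \<Rightarrow> complex^5 \<Rightarrow> complex^5" "(*)" c by (rule c(1))
  interpret ld: Vector_Spaces.linear "(*s) :: complex \<Rightarrow> complex^5 \<Rightarrow> complex^5" "(*)" d by (rule d(1))
  have cb: "c b4 = 1" "c b5 = 0" "d b4 = 0" "d b5 = 1" using c(2) d(2) Eeq b(2) by auto
  have c0: "\<forall>x\<in>B0. c x = 0" "\<forall>x\<in>B0. d x = 0" using c(2) d(2) E(1) b4n by auto
  show ?thesis
  proof (rule that[OF c(1) d(1)])
    fix x
    show "x \<in> P \<longleftrightarrow> c x = 0 \<and> d x = 0"
    proof
      assume "x \<in> P"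
      then have xs: "x \<in> vec.span B0" using spB0 by simp
      show "c x = 0 \<and> d x = 0"
        using lin_kernel_span[OF c(1) xs] lin_kernel_span[OF d(1) xs] c0 by simp
    next
      assume z: "c x = 0 \<and> d x = 0"
      have "x \<in> vec.span (insert b4 (insert b5 B0))" using E(3) Eeq by auto
      then obtain k where k: "x - k *s b4 \<in> vec.span (insert b5 B0)" using vec.span_breakdown_eq by blast
      then obtain l where l: "x - k *s b4 - l *s b5 \<in> vec.span B0" using vec.span_breakdown_eq by blast
      have "c (x - k *s b4 - l *s b5) = 0" "d (x - k *s b4 - l *s b5) = 0"
        using lin_kernel_span[OF c(1) l] lin_kernel_span[OF d(1) l] c0 by auto
      moreover have "c (x - k *s b4 - l *s b5) = c x - k * c b4 - l * c b5"
        by (simp only: lc.diff lc.scale)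
      moreover have "d (x - k *s b4 - l *s b5) = d x - k * d b4 - l * d b5"
        by (simp only: ld.diff ld.scale)
      ultimately have "k = 0" "l = 0" using z cb by simp_all
      then show "x \<in> P" using l spB0 by simp
    qed
  qed
qed



lemma lin_sum_form:
  assumes lc: "Vector_Spaces.linear ((*s) :: complex \<Rightarrow> complex^'n \<Rightarrow> complex^'n) (*) c"
  shows "c x = (\<Sum>j\<in>UNIV. x$j * c (axis j 1))"
proof -
  interpret lc: Vector_Spaces.linear "(*s) :: complex \<Rightarrow> complex^'n \<Rightarrow> complex^'n" "(*)" c by (rule lc)
  have "c x = c (\<Sum>j\<in>UNIV. x$j *s axis j 1)" by (simp only: basis_expansion)
  also have "\<dots> = (\<Sum>j\<in>UNIV. c (x$j *s axis j 1))" by (rule lc.sum)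
  also have "\<dots> = (\<Sum>j\<in>UNIV. x$j * c (axis j 1))" by (rule sum.cong) (simp_all only: lc.scale)
  finally show ?thesis .
qed

lemma lin_deriv:
  assumes lc: "Vector_Spaces.linear ((*s) :: complex \<Rightarrow> complex^'n \<Rightarrow> complex^'n) (*) c"
    and hg: "holo_curve g U" and U: "open U" and t: "t \<in> U"
  shows "((\<lambda>s. c (g s)) has_field_derivative c (vderiv g t)) (at t)"
proof -
  have e: "(\<lambda>s. c (g s)) = (\<lambda>s. \<Sum>j\<in>UNIV. g s $ j * c (axis j 1))"
    by (rule ext) (rule lin_sum_form[OF lc])
  have "((\<lambda>s. \<Sum>j\<in>UNIV. g s $ j * c (axis j 1)) has_field_derivative
        (\<Sum>j\<in>UNIV. deriv (\<lambda>s. g s $ j) t * c (axis j 1))) (at t)"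
  proof (rule DERIV_sum)
    fix j :: 'n
    have "(\<lambda>s. g s $ j) holomorphic_on U" using hg unfolding holo_curve_def by blast
    then have "((\<lambda>s. g s $ j) has_field_derivative deriv (\<lambda>s. g s $ j) t) (at t)"
      using U t by (rule holomorphic_derivI)
    then show "((\<lambda>s. g s $ j * c (axis j 1)) has_field_derivative deriv (\<lambda>s. g s $ j) t * c (axis j 1)) (at t)"
      by (rule DERIV_cmult_right)
  qed
  moreover have "c (vderiv g t) = (\<Sum>j\<in>UNIV. deriv (\<lambda>s. g s $ j) t * c (axis j 1))"
  proof -
    have "c (vderiv g t) = (\<Sum>j\<in>UNIV. vderiv g t $ j * c (axis j 1))" by (rule lin_sum_form[OF lc])
    also have "\<dots> = (\<Sum>j\<in>UNIV. deriv (\<lambda>s. g s $ j) t * c (axis j 1))" by (simp add: vderiv_def)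
    finally show ?thesis .
  qed
  ultimately show ?thesis by (simp only: e)
qed

lemma lin_holo:
  assumes lc: "Vector_Spaces.linear ((*s) :: complex \<Rightarrow> complex^'n \<Rightarrow> complex^'n) (*) c"
    and hg: "holo_curve g U"
  shows "(\<lambda>s. c (g s)) holomorphic_on U"
proof -
  have e: "(\<lambda>s. c (g s)) = (\<lambda>s. \<Sum>j\<in>UNIV. g s $ j * c (axis j 1))"
    by (rule ext) (rule lin_sum_form[OF lc])
  have "\<And>j. (\<lambda>s. g s $ j) holomorphic_on U" using hg unfolding holo_curve_def by blast
  then show ?thesis unfolding e
    by (intro holomorphic_on_sum holomorphic_on_mult holomorphic_on_const)
qed

lemma holo_vderiv:
  assumes hg: "holo_curve g U" and U: "open U"
  shows "holo_curve (vderiv g) U"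
  unfolding holo_curve_def
proof
  fix i
  have e: "(\<lambda>s. vderiv g s $ i) = deriv (\<lambda>s. g s $ i)"
    by (rule ext) (simp add: vderiv_def)
  have "(\<lambda>s. g s $ i) holomorphic_on U" using hg unfolding holo_curve_def by blast
  then show "(\<lambda>s. vderiv g s $ i) holomorphic_on U" unfolding e using U by (rule holomorphic_deriv)
qed

lemma lin_deriv_eq:
  assumes lc: "Vector_Spaces.linear ((*s) :: complex \<Rightarrow> complex^'n \<Rightarrow> complex^'n) (*) c"
    and hg: "holo_curve g U" and U: "open U" and t: "t \<in> U"
  shows "deriv (\<lambda>s. c (g s)) t = c (vderiv g t)"
  by (rule DERIV_imp_deriv[OF lin_deriv[OF assms]])



lemma det_zero:
  fixes c d :: "complex^5 \<Rightarrow> complex"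
  assumes sP: "vec.subspace P" and dP: "vec.dim P = 3"
    and lc: "Vector_Spaces.linear (*s) (*) c" and ld: "Vector_Spaces.linear (*s) (*) d"
    and ker: "\<And>x. x \<in> P \<longleftrightarrow> c x = 0 \<and> d x = 0"
    and sT: "vec.subspace T" and dT: "vec.dim T = 3" and dTP: "vec.dim (T \<inter> P) = 2"
    and x: "x \<in> T" and y: "y \<in> T"
  shows "c x * d y - d x * c y = 0"
proof (rule ccontr)
  interpret lc: Vector_Spaces.linear "(*s) :: complex \<Rightarrow> complex^5 \<Rightarrow> complex^5" "(*)" c by (rule lc)
  interpret ld: Vector_Spaces.linear "(*s) :: complex \<Rightarrow> complex^5 \<Rightarrow> complex^5" "(*)" d by (rule ld)
  define \<delta> where "\<delta> = c x * d y - d x * c y"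
  assume "c x * d y - d x * c y \<noteq> 0"
  then have nz: "\<delta> \<noteq> 0" unfolding \<delta>_def .
  have all: "{a + b |a b. a \<in> T \<and> b \<in> P} = UNIV"
  proof (rule set_eqI, rule iffI)
    fix z :: "complex^5"
    define \<alpha> where "\<alpha> = (c z * d y - d z * c y) / \<delta>"
    define \<beta> where "\<beta> = (c x * d z - d x * c z) / \<delta>"
    have "c (z - \<alpha> *s x - \<beta> *s y) = c z - \<alpha> * c x - \<beta> * c y" by (simp only: lc.diff lc.scale)
    also have "\<dots> = (c z * \<delta> - ((c z * d y - d z * c y) * c x + (c x * d z - d x * c z) * c y)) / \<delta>"
      using nz unfolding \<alpha>_def \<beta>_def by (simp add: field_simps)
    also have "\<dots> = 0" unfolding \<delta>_def by (simp add: algebra_simps)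
    finally have c0: "c (z - \<alpha> *s x - \<beta> *s y) = 0" .
    have "d (z - \<alpha> *s x - \<beta> *s y) = d z - \<alpha> * d x - \<beta> * d y" by (simp only: ld.diff ld.scale)
    also have "\<dots> = (d z * \<delta> - ((c z * d y - d z * c y) * d x + (c x * d z - d x * c z) * d y)) / \<delta>"
      using nz unfolding \<alpha>_def \<beta>_def by (simp add: field_simps)
    also have "\<dots> = 0" unfolding \<delta>_def by (simp add: algebra_simps)
    finally have d0: "d (z - \<alpha> *s x - \<beta> *s y) = 0" .
    have p: "z - \<alpha> *s x - \<beta> *s y \<in> P" using ker c0 d0 by blast
    have a: "\<alpha> *s x + \<beta> *s y \<in> T"
      using sT x y vec.subspace_add vec.subspace_scale by blast
    have "z = (\<alpha> *s x + \<beta> *s y) + (z - \<alpha> *s x - \<beta> *s y)" by (simp add: algebra_simps)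
    then show "z \<in> {a + b |a b. a \<in> T \<and> b \<in> P}" using a p by blast
  qed simp
  have "vec.dim {a + b |a b. a \<in> T \<and> b \<in> P} + vec.dim (T \<inter> P) = vec.dim T + vec.dim P"
    by (rule vec.dim_sums_Int[OF sT sP])
  moreover have "vec.dim (UNIV :: (complex^5) set) = 5"
    using vec_dim_card[where 'a=complex and 'n=5] by simp
  ultimately show False using all dT dP dTP by simp
qed

lemma mem_H:
  fixes c d :: "complex^5 \<Rightarrow> complex"
  assumes lc: "Vector_Spaces.linear (*s) (*) c" and ld: "Vector_Spaces.linear (*s) (*) d"
    and ker: "\<And>x. x \<in> P \<longleftrightarrow> c x = 0 \<and> d x = 0"
    and w: "c w \<noteq> 0 \<or> d w \<noteq> 0" and det: "c w * d x - d w * c x = 0"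
  shows "x \<in> vec.span (insert w P)"
proof -
  interpret lc: Vector_Spaces.linear "(*s) :: complex \<Rightarrow> complex^5 \<Rightarrow> complex^5" "(*)" c by (rule lc)
  interpret ld: Vector_Spaces.linear "(*s) :: complex \<Rightarrow> complex^5 \<Rightarrow> complex^5" "(*)" d by (rule ld)
  define k where "k = (if c w \<noteq> 0 then c x / c w else d x / d w)"
  have e1: "c (x - k *s w) = c x - k * c w" by (simp only: lc.diff lc.scale)
  have e2: "d (x - k *s w) = d x - k * d w" by (simp only: ld.diff ld.scale)
  have "c (x - k *s w) = 0 \<and> d (x - k *s w) = 0"
  proof (cases "c w \<noteq> 0")
    case True
    have "d x - c x / c w * d w = (c w * d x - d w * c x) / c w" using True by (simp add: field_simps)
    then show ?thesis using True e1 e2 det unfolding k_def by simp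
  next
    case False
    then have "d w \<noteq> 0" using w by simp
    moreover have "c x = 0" using det False \<open>d w \<noteq> 0\<close> by simp
    ultimately show ?thesis using False e1 e2 unfolding k_def by simp
  qed
  then have "x - k *s w \<in> P" using ker by blast
  then have "x - k *s w \<in> vec.span P" using vec.span_base by blast
  then show ?thesis using vec.span_breakdown_eq by blast
qed

lemma H_hyp:
  fixes c d :: "complex^5 \<Rightarrow> complex"
  assumes sP: "vec.subspace P" and dP: "vec.dim P = 3"
    and ker: "\<And>x. x \<in> P \<longleftrightarrow> c x = 0 \<and> d x = 0"
    and w: "c w \<noteq> 0 \<or> d w \<noteq> 0"
  shows "proj_hyperplane (vec.span (insert w P))" "P \<subseteq> vec.span (insert w P)"
proof -
  have "w \<notin> P" using ker w by blast
  then have "w \<notin> vec.span P" using vec.span_eq_iff sP by blast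
  then have "vec.dim (vec.span (insert w P)) = 4" using dP by (simp add: vec.dim_insert)
  then show "proj_hyperplane (vec.span (insert w P))"
    unfolding proj_hyperplane_def using vec.subspace_span by blast
  show "P \<subseteq> vec.span (insert w P)" using vec.span_superset by blast
qed


lemma core:
  assumes U: "open U" "connected U" and t0: "t0 \<in> U"
    and hA: "A holomorphic_on U" and hB: "B holomorphic_on U" and A0: "A t0 \<noteq> 0"
    and W: "\<forall>t\<in>U. A t * deriv B t - B t * deriv A t = 0"
  shows "\<forall>t\<in>U. A t0 * B t - B t0 * A t = 0"
proof -
  have contA: "continuous_on U A" using hA holomorphic_on_imp_continuous_on by blast
  obtain r where r: "r > 0" "ball t0 r \<subseteq> U" "\<forall>t\<in>ball t0 r. A t \<noteq> 0"
  proof -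
    have "isCont A t0" using contA U(1) t0 continuous_on_eq_continuous_at by blast
    then obtain e where e: "e > 0" "\<forall>t. dist t t0 < e \<longrightarrow> A t \<noteq> 0"
      using continuous_at_avoid[of t0 A 0] A0 by (auto simp: dist_commute)
    obtain e2 where e2: "e2 > 0" "ball t0 e2 \<subseteq> U" using U(1) t0 open_contains_ball by blast
    show ?thesis
      apply (rule that[of "min e e2"])
      using e e2 by (auto simp: dist_commute)
  qed
  have "\<exists>k. \<forall>t\<in>ball t0 r. B t / A t = k"
  proof (rule has_field_derivative_zero_constant)
    fix t assume t: "t \<in> ball t0 r"
    then have tU: "t \<in> U" using r by auto
    have dA: "(A has_field_derivative deriv A t) (at t)"
      using hA U(1) tU holomorphic_derivI by blast
    have dB: "(B has_field_derivative deriv B t) (at t)"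
      using hB U(1) tU holomorphic_derivI by blast
    have "((\<lambda>t. B t / A t) has_field_derivative (deriv B t * A t - B t * deriv A t) / (A t * A t)) (at t)"
      using DERIV_divide[OF dB dA] r(3) t by auto
    moreover have "deriv B t * A t - B t * deriv A t = 0" using W tU by (simp add: mult.commute)
    ultimately show "((\<lambda>t. B t / A t) has_field_derivative 0) (at t within ball t0 r)"
      by (simp add: has_field_derivative_at_within)
  qed auto
  then obtain k where k: "\<forall>t\<in>ball t0 r. B t / A t = k" by blast
  have loc: "A t0 * B t - B t0 * A t = 0" if "t \<in> ball t0 r" for t
  proof -
    have "B t = k * A t" "B t0 = k * A t0" using k that r by (auto simp: field_simps)
    then show ?thesis by simp
  qed
  show ?thesis
  proof
    fix t assume tU: "t \<in> U"
    show "A t0 * B t - B t0 * A t = 0"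
    proof -
      have h: "(\<lambda>t. A t0 * B t - B t0 * A t) holomorphic_on U"
        using hA hB by (auto intro!: holomorphic_intros)
      show ?thesis
      using analytic_continuation_open[of "ball t0 r" U "\<lambda>t. A t0 * B t - B t0 * A t" "\<lambda>_. 0" t]
        U r tU loc h by auto
    qed
  qed
qed


lemma deriv_zero_open:
  assumes "open U" "\<forall>s\<in>U. f s = 0" "t \<in> U"
  shows "deriv f t = (0::complex)"
proof -
  have "\<forall>\<^sub>F s in nhds t. f s = (\<lambda>_. 0) s"
    using eventually_nhds_in_open[OF assms(1,3)] by (rule eventually_mono) (use assms(2) in auto)
  then have "deriv f t = deriv (\<lambda>_. 0) t" by (rule deriv_cong_ev) simp
  then show ?thesis by simp
qed

lemma not_in_P:
  assumes "T \<subseteq> P" "vec.dim T = 3" "vec.dim (T \<inter> P) = 2"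
  shows False
proof -
  have "T \<inter> P = T" using assms(1) by blast
  then show False using assms(2,3) by simp
qed

lemma span2_sub:
  assumes "vec.subspace H" "a \<in> H" "b \<in> H"
  shows "vec.span {a, b} \<subseteq> H"
proof -
  have "{a, b} \<subseteq> H" using assms(2,3) by blast
  then show ?thesis using vec.span_minimal assms(1) by blast
qed

lemma span3_sub:
  assumes "vec.subspace H" "a \<in> H" "b \<in> H" "e \<in> H"
  shows "vec.span {a, b, e} \<subseteq> H"
proof -
  have "{a, b, e} \<subseteq> H" using assms(2,3,4) by blast
  then show ?thesis using vec.span_minimal assms(1) by blast
qed

lemma in_span3:
  shows "a \<in> vec.span {a, b, e}" "b \<in> vec.span {a, b, e}" "e \<in> vec.span {a, b, e}"
  by (rule vec.span_base; simp)+

lemma analytic_part: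
  fixes c d :: "complex^5 \<Rightarrow> complex" and g :: "complex \<Rightarrow> complex^5"
  assumes U: "open U" "connected U" and hg: "holo_curve g U"
    and lc: "Vector_Spaces.linear (*s) (*) c" and ld: "Vector_Spaces.linear (*s) (*) d"
    and ker: "\<And>x. x \<in> P \<longleftrightarrow> c x = 0 \<and> d x = 0"
    and DZ: "\<And>t. t \<in> U \<Longrightarrow> c (g t) * d (vderiv g t) - d (g t) * c (vderiv g t) = 0"
  shows "(\<forall>t\<in>U. g t \<in> P \<and> vderiv g t \<in> P \<and> vderiv (vderiv g) t \<in> P) \<or>
     (\<exists>w. (c w \<noteq> 0 \<or> d w \<noteq> 0) \<and> (\<forall>t\<in>U. g t \<in> vec.span (insert w P) \<and> vderiv g t \<in> vec.span (insert w P)))"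
proof -
  define A where "A = (\<lambda>s. c (g s))"
  define B where "B = (\<lambda>s. d (g s))"
  have hA: "A holomorphic_on U" unfolding A_def by (rule lin_holo[OF lc hg])
  have hB: "B holomorphic_on U" unfolding B_def by (rule lin_holo[OF ld hg])
  have dA: "deriv A t = c (vderiv g t)" if "t \<in> U" for t
    unfolding A_def using lin_deriv_eq[OF lc hg U(1) that] .
  have dB: "deriv B t = d (vderiv g t)" if "t \<in> U" for t
    unfolding B_def using lin_deriv_eq[OF ld hg U(1) that] .
  have W: "\<forall>t\<in>U. A t * deriv B t - B t * deriv A t = 0"
  proof
    fix t assume t: "t \<in> U"
    have "A t * deriv B t - B t * deriv A t = c (g t) * d (vderiv g t) - d (g t) * c (vderiv g t)"
      unfolding dA[OF t] dB[OF t] by (simp add: A_def B_def)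
    then show "A t * deriv B t - B t * deriv A t = 0" using DZ[OF t] by simp
  qed
  show ?thesis
  proof (cases "\<forall>t\<in>U. A t = 0 \<and> B t = 0")
    case True
    have hg1: "holo_curve (vderiv g) U" using holo_vderiv[OF hg U(1)] .
    have A0: "\<forall>s\<in>U. A s = 0" and B0: "\<forall>s\<in>U. B s = 0" using True by auto
    have d1: "c (vderiv g t) = 0 \<and> d (vderiv g t) = 0" if "t \<in> U" for t
    proof -
      have "deriv A t = 0" by (rule deriv_zero_open[OF U(1) A0 that])
      moreover have "deriv B t = 0" by (rule deriv_zero_open[OF U(1) B0 that])
      ultimately show ?thesis using dA[OF that] dB[OF that] by simp
    qed
    have d2: "c (vderiv (vderiv g) t) = 0 \<and> d (vderiv (vderiv g) t) = 0" if "t \<in> U" for t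
    proof -
      have C0: "\<forall>s\<in>U. c (vderiv g s) = 0" and D0: "\<forall>s\<in>U. d (vderiv g s) = 0" using d1 by auto
      have "deriv (\<lambda>s. c (vderiv g s)) t = 0" by (rule deriv_zero_open[OF U(1) C0 that])
      moreover have "deriv (\<lambda>s. d (vderiv g s)) t = 0" by (rule deriv_zero_open[OF U(1) D0 that])
      ultimately show ?thesis
        using lin_deriv_eq[OF lc hg1 U(1) that] lin_deriv_eq[OF ld hg1 U(1) that] by simp
    qed
    have "\<forall>t\<in>U. g t \<in> P \<and> vderiv g t \<in> P \<and> vderiv (vderiv g) t \<in> P"
    proof
      fix t assume t: "t \<in> U"
      have "c (g t) = 0 \<and> d (g t) = 0" using True t unfolding A_def B_def by auto
      then have "g t \<in> P" "vderiv g t \<in> P" "vderiv (vderiv g) t \<in> P"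
        using d1[OF t] d2[OF t] ker by simp_all
      then show "g t \<in> P \<and> vderiv g t \<in> P \<and> vderiv (vderiv g) t \<in> P" by simp
    qed
    then show ?thesis by blast
  next
    case False
    then obtain t0 where t0: "t0 \<in> U" "A t0 \<noteq> 0 \<or> B t0 \<noteq> 0" by blast
    have F: "\<forall>t\<in>U. A t0 * B t - B t0 * A t = 0"
    proof (cases "A t0 \<noteq> 0")
      case True
      show ?thesis by (rule core[OF U t0(1) hA hB True W])
    next
      case False
      then have B0: "B t0 \<noteq> 0" using t0 by simp
      have W': "\<forall>t\<in>U. B t * deriv A t - A t * deriv B t = 0"
      proof
        fix t assume "t \<in> U"
        then have "A t * deriv B t - B t * deriv A t = 0" using W by blast
        then show "B t * deriv A t - A t * deriv B t = 0" by (simp add: algebra_simps)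
      qed
      have F2: "\<forall>t\<in>U. B t0 * A t - A t0 * B t = 0" by (rule core[OF U t0(1) hB hA B0 W'])
      show ?thesis
      proof
        fix t assume "t \<in> U"
        then have "B t0 * A t - A t0 * B t = 0" using F2 by blast
        then show "A t0 * B t - B t0 * A t = 0" by (simp add: algebra_simps)
      qed
    qed
    have F': "A t0 * deriv B t - B t0 * deriv A t = 0" if "t \<in> U" for t
    proof -
      have "((\<lambda>t. A t0 * B t - B t0 * A t) has_field_derivative (A t0 * deriv B t - B t0 * deriv A t)) (at t)"
        using holomorphic_derivI[OF hA U(1) that] holomorphic_derivI[OF hB U(1) that]
        by (intro DERIV_diff DERIV_cmult)
      then have "deriv (\<lambda>t. A t0 * B t - B t0 * A t) t = A t0 * deriv B t - B t0 * deriv A t"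
        by (rule DERIV_imp_deriv)
      moreover have "deriv (\<lambda>t. A t0 * B t - B t0 * A t) t = 0"
        by (rule deriv_zero_open[OF U(1) F that])
      ultimately show ?thesis by simp
    qed
    have w: "c (g t0) \<noteq> 0 \<or> d (g t0) \<noteq> 0" using t0 unfolding A_def B_def by simp
    have "\<forall>t\<in>U. g t \<in> vec.span (insert (g t0) P) \<and> vderiv g t \<in> vec.span (insert (g t0) P)"
    proof
      fix t assume t: "t \<in> U"
      have e1: "c (g t0) * d (g t) - d (g t0) * c (g t) = 0"
        using F t unfolding A_def B_def by blast
      have e2: "c (g t0) * d (vderiv g t) - d (g t0) * c (vderiv g t) = 0"
        using F'[OF t] unfolding dA[OF t] dB[OF t] by (simp add: A_def B_def)
      show "g t \<in> vec.span (insert (g t0) P) \<and> vderiv g t \<in> vec.span (insert (g t0) P)"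
        using mem_H[OF lc ld ker w e1] mem_H[OF lc ld ker w e2] by blast
    qed
    then show ?thesis using w by blast
  qed
qed

theorem mainTheorem3:
  fixes g :: "complex \<Rightarrow> complex^5" and U :: "complex set"
    and S :: "(complex^5) set" and T :: "complex \<Rightarrow> (complex^5) set"
    and P :: "(complex^5) set"
  assumes "open U" and "connected U" and "U \<noteq> {}"
    and "holo_curve g U"
    and "(S = tdev_surface g U \<and> (\<forall>t\<in>U. T t = tdev_tplane g t))
         \<or> (\<exists>v. S = cone_surface v g U \<and> (\<forall>t\<in>U. T t = cone_tplane v g t))"
    and "\<forall>t\<in>U. proj_plane (T t)"
    and "\<not> (\<exists>Q. proj_plane Q \<and> S \<subseteq> Q)"
    and "proj_plane P"
    and "\<forall>t\<in>U. proj_line (T t \<inter> P)"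
  shows "\<exists>H. proj_hyperplane H \<and> P \<subseteq> H \<and> S \<subseteq> H"
proof -
  note U = assms(1,2)
  have sP: "vec.subspace P" and dP: "vec.dim P = 3" using assms(8) by (auto simp: proj_plane_def)
  obtain c d :: "complex^5 \<Rightarrow> complex" where lc: "Vector_Spaces.linear (*s) (*) c"
      and ld: "Vector_Spaces.linear (*s) (*) d" and ker: "\<And>x. x \<in> P \<longleftrightarrow> c x = 0 \<and> d x = 0"
    using coords[OF assms(8)] by blast
  have sT: "vec.subspace (T t)" "vec.dim (T t) = 3" if "t \<in> U" for t
    using assms(6) that by (auto simp: proj_plane_def)
  have dTP: "vec.dim (T t \<inter> P) = 2" if "t \<in> U" for t
    using assms(9) that by (auto simp: proj_line_def)
  have DZ: "c x * d y - d x * c y = 0" if "t \<in> U" "x \<in> T t" "y \<in> T t" for t x y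
    using det_zero[OF sP dP lc ld ker sT(1)[OF that(1)] sT(2)[OF that(1)] dTP[OF that(1)] that(2,3)] .
  have ggT: "g t \<in> T t \<and> vderiv g t \<in> T t" if "t \<in> U" for t
  proof (cases "S = tdev_surface g U \<and> (\<forall>t\<in>U. T t = tdev_tplane g t)")
    case True
    then have eq: "T t = vec.span {g t, vderiv g t, vderiv (vderiv g) t}" using that unfolding tdev_tplane_def by blast
    show ?thesis unfolding eq by (intro conjI in_span3)
  next
    case False
    have ex: "\<exists>v. S = cone_surface v g U \<and> (\<forall>t\<in>U. T t = cone_tplane v g t)"
      using assms(5)
    proof
      assume "S = tdev_surface g U \<and> (\<forall>t\<in>U. T t = tdev_tplane g t)"
      then show ?thesis using False by contradiction
    next
      assume "\<exists>v. S = cone_surface v g U \<and> (\<forall>t\<in>U. T t = cone_tplane v g t)"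
      then show ?thesis .
    qed
    then obtain v where "\<forall>t\<in>U. T t = cone_tplane v g t" by blast
    then have eq: "T t = vec.span {v, g t, vderiv g t}" using that unfolding cone_tplane_def by blast
    show ?thesis unfolding eq by (intro conjI in_span3)
  qed
  have DZ1: "c (g t) * d (vderiv g t) - d (g t) * c (vderiv g t) = 0" if "t \<in> U" for t
    using DZ[OF that conjunct1[OF ggT[OF that]] conjunct2[OF ggT[OF that]]] .
  note analytic = analytic_part[OF U assms(4) lc ld ker DZ1]
  obtain t1 where t1: "t1 \<in> U" using assms(3) by blast
  show ?thesis
  proof (cases "S = tdev_surface g U \<and> (\<forall>t\<in>U. T t = tdev_tplane g t)")
    case True
    show ?thesis
    proof (cases "\<forall>t\<in>U. g t \<in> P \<and> vderiv g t \<in> P \<and> vderiv (vderiv g) t \<in> P")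
      case True2: True
      have "g t1 \<in> P" "vderiv g t1 \<in> P" "vderiv (vderiv g) t1 \<in> P" using True2 t1 by simp_all
      then have "vec.span {g t1, vderiv g t1, vderiv (vderiv g) t1} \<subseteq> P"
        by (rule span3_sub[OF sP])
      then have "T t1 \<subseteq> P" using True t1 unfolding tdev_tplane_def by simp
      then show ?thesis using not_in_P sT(2)[OF t1] dTP[OF t1] by blast
    next
      case False
      then obtain w where w: "c w \<noteq> 0 \<or> d w \<noteq> 0"
        "\<forall>t\<in>U. g t \<in> vec.span (insert w P) \<and> vderiv g t \<in> vec.span (insert w P)"
        using analytic by blast
      have "vec.span {g t, vderiv g t} \<subseteq> vec.span (insert w P)" if "t \<in> U" for t
      proof -
        have "g t \<in> vec.span (insert w P)" "vderiv g t \<in> vec.span (insert w P)" using w(2) that by simp_all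
        then show ?thesis by (rule span2_sub[OF vec.subspace_span])
      qed
      then have "tdev_surface g U \<subseteq> vec.span (insert w P)"
        unfolding tdev_surface_def by (rule UN_least)
      then have "S \<subseteq> vec.span (insert w P)" using True by simp
      then show ?thesis using H_hyp[OF sP dP ker w(1)] by blast
    qed
  next
    case False
    have ex: "\<exists>v. S = cone_surface v g U \<and> (\<forall>t\<in>U. T t = cone_tplane v g t)"
      using assms(5)
    proof
      assume "S = tdev_surface g U \<and> (\<forall>t\<in>U. T t = tdev_tplane g t)"
      then show ?thesis using False by contradiction
    next
      assume "\<exists>v. S = cone_surface v g U \<and> (\<forall>t\<in>U. T t = cone_tplane v g t)"
      then show ?thesis .
    qed
    then obtain v where v: "S = cone_surface v g U" "\<forall>t\<in>U. T t = cone_tplane v g t"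
      by blast
    have vT: "v \<in> T t" if "t \<in> U" for t
    proof -
      have "T t = vec.span {v, g t, vderiv g t}" using v(2) that unfolding cone_tplane_def by simp
      then show ?thesis using in_span3(1) by simp
    qed
    show ?thesis
    proof (cases "v \<in> P")
      case False
      then have w: "c v \<noteq> 0 \<or> d v \<noteq> 0" using ker by blast
      have vH: "v \<in> vec.span (insert v P)" by (rule vec.span_base) simp
      have "vec.span {v, g t} \<subseteq> vec.span (insert v P)" if "t \<in> U" for t
      proof -
        have "g t \<in> vec.span (insert v P)"
          by (rule mem_H[OF lc ld ker w DZ[OF that vT[OF that]]]) (use ggT[OF that] in blast)
        with vH show ?thesis by (rule span2_sub[OF vec.subspace_span])
      qed
      then have "cone_surface v g U \<subseteq> vec.span (insert v P)"
        unfolding cone_surface_def by (rule UN_least)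
      then have "S \<subseteq> vec.span (insert v P)" using v(1) by simp
      then show ?thesis using H_hyp[OF sP dP ker w] by blast
    next
      case vP: True
      show ?thesis
      proof (cases "\<forall>t\<in>U. g t \<in> P \<and> vderiv g t \<in> P \<and> vderiv (vderiv g) t \<in> P")
        case True2: True
        have "g t1 \<in> P" "vderiv g t1 \<in> P" using True2 t1 by simp_all
        with vP have "vec.span {v, g t1, vderiv g t1} \<subseteq> P"
          by (rule span3_sub[OF sP])
        then have "T t1 \<subseteq> P" using v(2) t1 unfolding cone_tplane_def by simp
        then show ?thesis using not_in_P sT(2)[OF t1] dTP[OF t1] by blast
      next
        case False
        then obtain w where w: "c w \<noteq> 0 \<or> d w \<noteq> 0"
          "\<forall>t\<in>U. g t \<in> vec.span (insert w P) \<and> vderiv g t \<in> vec.span (insert w P)"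
          using analytic by blast
        have vH: "v \<in> vec.span (insert w P)" using vP by (intro vec.span_base) simp
        have "vec.span {v, g t} \<subseteq> vec.span (insert w P)" if "t \<in> U" for t
        proof -
          have "g t \<in> vec.span (insert w P)" using w(2) that by simp
          with vH show ?thesis by (rule span2_sub[OF vec.subspace_span])
        qed
        then have "cone_surface v g U \<subseteq> vec.span (insert w P)"
          unfolding cone_surface_def by (rule UN_least)
        then have "S \<subseteq> vec.span (insert w P)" using v(1) by simp
        then show ?thesis using H_hyp[OF sP dP ker w(1)] by blast
      qed
    qed
  qed
qed

end
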